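(* Let $n\ge1$ and let $c\in\mathfrak{S}_{n+1}$ be a Coxeter element. For every $k\in\{1,\ldots,n\}$, \[\#D_k(\boldsymbol\lambda(c))=\min\bigl(\#\{\ell\in\mathbf L_c\cup\{1\}:\ell\leqslant k\},\ \#\{r\in\mathbf R_c\cup\{n+1\}:r>k\}\bigr).\]
   Context: $s_i=(i,i+1)$; a Coxeter element of $\mathfrak{S}_{n+1}$ is a product of $s_1,\dots,s_n$, each exactly once. It is a long cycle $c=(c_1,\dots,c_m,c_{m+1},\dots,c_{n+1})$ with $c_1=1<c_2<\dots<c_m=n+1>c_{m+1}>\dots>c_{n+1}>1$; $\mathbf L_c=\{c_2,\dots,c_{m-1}\}$, $\mathbf R_c=\{c_{m+1},\dots,c_{n+1}\}$. With $\mathbf L=\mathbf L_c\cup\{1\}=\{\ell_1<\dots<\ell_p\}$ and $\mathbf R=\mathbf R_c\cup\{n+1\}$, $\boldsymbol\lambda(c)$ is the partition with parts $\#\{r\in\mathbf R:\ell_i<r\}$, $i=1,\dots,p$. For a partition $\lambda$ with Ferrers diagram $\mathrm{Fer}(\lambda)=\{(i,j):j\le\lambda_i\}$, $D_k(\lambda)=\{(i,j)\in\mathrm{Fer}(\lambda):\lambda_1+i-j=k\}$. *)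

theory Defs
  imports Main
begin

definition simple_transp :: "nat \<Rightarrow> nat \<Rightarrow> nat" where
  "simple_transp i x = (if x = i then Suc i else if x = Suc i then i else x)"

definition coxeter_elem :: "nat \<Rightarrow> (nat \<Rightarrow> nat) \<Rightarrow> bool" where
  "coxeter_elem n c \<longleftrightarrow>
     (\<exists>ws. distinct ws \<and> set ws = {1..n} \<and>
           c = foldr (\<lambda>i f. simple_transp i \<circ> f) ws id)"

text \<open>Writing c = (c_1, ..., c_{n+1}) with c_1 = 1 and c(c_i) = c_{i+1}, so c_i = c^(i-1)(1).
  m is the position of n+1, i.e. m - 1 is the least j with c^j(1) = n+1.\<close>
definition pos_top :: "nat \<Rightarrow> (nat \<Rightarrow> nat) \<Rightarrow> nat" where
  "pos_top n c = (LEAST j. (c ^^ j) 1 = n + 1)"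

definition Lc :: "nat \<Rightarrow> (nat \<Rightarrow> nat) \<Rightarrow> nat set" where
  "Lc n c = {(c ^^ j) 1 | j. 0 < j \<and> j < pos_top n c}"

definition Rc :: "nat \<Rightarrow> (nat \<Rightarrow> nat) \<Rightarrow> nat set" where
  "Rc n c = {(c ^^ j) 1 | j. pos_top n c < j \<and> j \<le> n}"

definition lambda_c :: "nat \<Rightarrow> (nat \<Rightarrow> nat) \<Rightarrow> nat list" where
  "lambda_c n c =
     map (\<lambda>l. card {r \<in> Rc n c \<union> {n + 1}. l < r}) (sorted_list_of_set (Lc n c \<union> {1}))"

definition Fer :: "nat list \<Rightarrow> (nat \<times> nat) set" where
  "Fer lam = {(i, j). 1 \<le> i \<and> i \<le> length lam \<and> 1 \<le> j \<and> j \<le> lam ! (i - 1)}"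

definition Dk :: "nat list \<Rightarrow> nat \<Rightarrow> (nat \<times> nat) set" where
  "Dk lam k = {(i, j) \<in> Fer lam. int (lam ! 0) + int i - int j = int k}"

end

theory Submission
  imports Defs
begin


abbreviation PP :: "nat list \<Rightarrow> nat \<Rightarrow> nat" where
  "PP ws \<equiv> foldr (\<lambda>i f. simple_transp i \<circ> f) ws id"

lemma st_inv: "simple_transp i (simple_transp i x) = x"
  by (simp add: simple_transp_def)

lemma st_bij: "bij (simple_transp i)"
  by (metis bijI' st_inv)

lemma PP_bij: "bij (PP ws)"
proof (induction ws)
  case Nil
  then show ?case using bij_id by (simp add: id_def)
next
  case (Cons a ws)
  have e: "PP (a # ws) = simple_transp a \<circ> PP ws" by (simp only: foldr.simps(2) o_apply)
  show ?case unfolding e by (rule bij_comp[OF Cons st_bij])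
qed

lemma PP_fix: "(\<forall>i\<in>set ws. x \<noteq> i \<and> x \<noteq> Suc i) \<Longrightarrow> PP ws x = x"
  by (induction ws) (auto simp: simple_transp_def)

lemma PP_append: "PP (as @ bs) = PP as \<circ> PP bs"
  by (induction as) auto

lemma PP_gen: "foldr (\<lambda>i f. simple_transp i \<circ> f) as g = PP as \<circ> g"
  by (induction as) (auto simp: comp_assoc)

definition cyc :: "nat \<Rightarrow> (nat \<Rightarrow> nat) \<Rightarrow> nat list \<Rightarrow> bool" where
  "cyc N f xs \<longleftrightarrow> length xs = N \<and> distinct xs \<and> set xs = {1..N} \<and> xs ! 0 = 1 \<and>
     (\<forall>i<N. f (xs ! i) = xs ! (Suc i mod N)) \<and> (\<forall>x. x \<notin> {1..N} \<longrightarrow> f x = x)"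

lemma ins_nth:
  assumes "t < M" "length xs = M" "i < Suc M"
  shows "(take (Suc t) xs @ y # drop (Suc t) xs) ! i =
     (if i \<le> t then xs ! i else if i = Suc t then y else xs ! (i - 1))"
  using assms by (auto simp: nth_append min_def nth_Cons' intro!: arg_cong[where f="(!) xs"])

lemma cyc_step:
  assumes cy: "cyc M c' xs" and M: "M \<ge> 1" and a: "a \<in> {1..M}"
    and c1: "\<And>x. x \<noteq> a \<Longrightarrow> x \<noteq> M + 1 \<Longrightarrow> c x = c' x"
    and c2: "c a = M + 1" and c3: "c (M + 1) = c' a"
  shows "\<exists>ys. cyc (M + 1) c ys"
proof -
  from cy have len: "length xs = M" and dis: "distinct xs" and st: "set xs = {1..M}"
    and h0: "xs ! 0 = 1" and sc: "\<forall>i<M. c' (xs ! i) = xs ! (Suc i mod M)"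
    and fx: "\<forall>x. x \<notin> {1..M} \<longrightarrow> c' x = x"
    by (auto simp: cyc_def)
  from a st obtain t where t: "t < M" "xs ! t = a" by (metis in_set_conv_nth len)
  define ys where "ys = take (Suc t) xs @ (M+1) # drop (Suc t) xs"
  have yn: "\<And>i. i < Suc M \<Longrightarrow> ys ! i = (if i \<le> t then xs ! i else if i = Suc t then M+1 else xs ! (i - 1))"
    unfolding ys_def using ins_nth[OF t(1) len] by blast
  have notM: "M + 1 \<notin> set xs" using st by auto
  have "length ys = M + 1" using len t by (simp add: ys_def)
  moreover have "distinct ys" using dis notM
    proof -
    have dd: "distinct (take (Suc t) xs @ drop (Suc t) xs)" using dis by simp
    have "distinct (take (Suc t) xs)" "distinct (drop (Suc t) xs)" "set (take (Suc t) xs) \<inter> set (drop (Suc t) xs) = {}"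
      using dd unfolding distinct_append by blast+
    moreover have "M+1 \<notin> set (take (Suc t) xs)" "M+1 \<notin> set (drop (Suc t) xs)"
      using notM in_set_takeD in_set_dropD by fastforce+
    ultimately show ?thesis unfolding ys_def by (auto simp del: append_take_drop_id)
  qed
  moreover have "set ys = {1..M+1}" using st
    proof -
    have "set ys = insert (M+1) (set (take (Suc t) xs @ drop (Suc t) xs))"
      unfolding ys_def by (simp del: append_take_drop_id)
    then show ?thesis using st by auto
  qed
  moreover have "ys ! 0 = 1" using yn h0 by simp
  moreover have "\<forall>x. x \<notin> {1..M+1} \<longrightarrow> c x = x"
    using fx c1 a by auto
  moreover have "\<forall>i<M+1. c (ys ! i) = ys ! (Suc i mod (M+1))"
  proof (intro allI impI)
    fix i assume i: "i < M + 1"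
    consider "i < t" | "i = t" | "i = Suc t" | "i > Suc t" by linarith
    then show "c (ys ! i) = ys ! (Suc i mod (M+1))"
    proof cases
      case 1
      have "xs ! i \<noteq> a" using t dis 1 len nth_eq_iff_index_eq[of xs i t] by auto
      moreover have "i < length xs" using 1 t len by simp
      then have "xs ! i \<noteq> M + 1" using notM nth_mem by metis
      ultimately show ?thesis using 1 c1 sc yn t i by simp
    next
      case 2
      then show ?thesis using c2 yn t i by simp
    next
      case 3
      have ca: "c' a = xs ! (Suc t mod M)" using sc t by auto
      show ?thesis
      proof (cases "Suc t < M")
        case True
        then show ?thesis using 3 yn c3 ca t by simp
      next
        case False
        then have "Suc t = M" using t by simp
        then show ?thesis using 3 yn c3 ca t h0 by simp
      qed
    next
      case 4
      have "xs ! (i - 1) \<noteq> a" using t dis 4 len i nth_eq_iff_index_eq[of xs "i-1" t] by auto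
      moreover have "i - 1 < length xs" using i 4 len by simp
      then have "xs ! (i - 1) \<noteq> M + 1" using notM nth_mem by metis
      ultimately have e: "c (ys ! i) = xs ! (i mod M)" using 4 c1 sc yn i by simp
      show ?thesis
      proof (cases "i < M")
        case True then show ?thesis using e yn 4 by simp
      next
        case False then have "i = M" using i by simp
        then show ?thesis using e yn h0 by simp
      qed
    qed
  qed
  ultimately show ?thesis unfolding cyc_def by blast
qed

lemma PP_cyc: "distinct ws \<Longrightarrow> set ws = {1..N} \<Longrightarrow> \<exists>xs. cyc (N+1) (PP ws) xs"
proof (induction N arbitrary: ws)
  case 0
  then have "ws = []" by simp
  then show ?case by (intro exI[of _ "[1]"]) (auto simp: cyc_def)
next
  case (Suc N)
  have "Suc N \<in> set ws" using Suc.prems by simp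
  then obtain as bs where ws: "ws = as @ Suc N # bs" using split_list[of "Suc N" ws] by blast
  have d': "distinct (as @ bs)" using Suc.prems(1) ws by simp
  have e1: "set (as @ bs) = set ws - {Suc N}" using Suc.prems(1) ws by auto
  have s': "set (as @ bs) = {1..N}" unfolding e1 Suc.prems(2) by auto
  from Suc.IH[OF d' s'] obtain xs where cy: "cyc (N+1) (PP (as @ bs)) xs" ..
  let ?M = "Suc N"
  have sa: "set as \<subseteq> {1..N}" and sb: "set bs \<subseteq> {1..N}" using s' by auto
  have fixas: "\<And>x. x = 0 \<or> x > ?M \<Longrightarrow> PP as x = x"
    by (rule PP_fix) (use sa in force)
  have fixbs: "\<And>x. x = 0 \<or> x > ?M \<Longrightarrow> PP bs x = x"
    by (rule PP_fix) (use sb in force)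
  have "\<exists>a. ?M = PP bs a" by (rule surjD[OF bij_is_surj[OF PP_bij[of bs]]])
  then obtain a where a0: "?M = PP bs a" ..
  then have a: "PP bs a = ?M" by (rule sym)
  have binj: "\<And>x y. PP bs x = PP bs y \<Longrightarrow> x = y" by (rule injD[OF bij_is_inj[OF PP_bij[of bs]]])
  have aM: "a \<in> {1..?M}"
  proof (rule ccontr)
    assume "a \<notin> {1..?M}"
    then have "a = 0 \<or> a > ?M" by auto
    then have "PP bs a = a" by (rule fixbs)
    then have "a = ?M" using a by (rule subst)
    then show False using \<open>a \<notin> {1..?M}\<close> by auto
  qed
  have ce1: "PP ws = PP as \<circ> PP (?M # bs)" unfolding ws by (rule PP_append)
  have ce2: "PP (?M # bs) = simple_transp ?M \<circ> PP bs" by (simp only: foldr.simps(2) o_apply)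
  have ceq: "PP ws = PP as \<circ> simple_transp ?M \<circ> PP bs" unfolding ce1 ce2 by (rule comp_assoc[symmetric])
  have cpeq: "PP (as @ bs) = PP as \<circ> PP bs" by (rule PP_append)
  have "\<exists>ys. cyc (?M + 1) (PP ws) ys"
  proof (rule cyc_step[OF cy[unfolded Suc_eq_plus1[symmetric]] _ aM])
    show "1 \<le> ?M" by simp
    fix x assume "x \<noteq> a" "x \<noteq> ?M + 1"
    have f1: "PP bs (?M + 1) = ?M + 1" using fixbs[of "?M+1"] by simp
    have "PP bs x \<noteq> ?M" using binj[of x a] a \<open>x \<noteq> a\<close> by auto
    moreover have "PP bs x \<noteq> ?M + 1" using binj[of x "?M+1"] f1 \<open>x \<noteq> ?M + 1\<close> by auto
    ultimately show "PP ws x = PP (as @ bs) x" unfolding ceq cpeq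
      by (simp add: simple_transp_def)
  next
    show "PP ws a = ?M + 1" unfolding ceq using a fixas[of "?M+1"] by (simp add: simple_transp_def)
  next
    show "PP ws (?M + 1) = PP (as @ bs) a" unfolding ceq cpeq using a fixbs[of "?M+1"]
      by (simp add: simple_transp_def)
  qed
  then show ?case by blast
qed

lemma cyc_orbit: "cyc N f xs \<Longrightarrow> j < N \<Longrightarrow> (f ^^ j) 1 = xs ! j"
proof (induction j)
  case 0
  then show ?case by (simp add: cyc_def)
next
  case (Suc j)
  then show ?case by (simp add: cyc_def)
qed




lemma partB:
  fixes L R :: "nat set" and n k :: nat
  assumes disj: "L \<inter> R = {}" and un: "L \<union> R = {1..n+1}" and L1: "1 \<in> L"
    and k1: "1 \<le> k" and kn: "k \<le> n"
  shows "card (Dk (map (\<lambda>l. card {r \<in> R. l < r}) (sorted_list_of_set L)) k) =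
     min (card {l \<in> L. l \<le> k}) (card {r \<in> R. k < r})"
proof -
  have fL: "finite L" and fR: "finite R"
    using un by (metis finite_Un finite_atLeastAtMost)+
  have unx: "\<And>x. (x \<in> L \<or> x \<in> R) = (1 \<le> x \<and> x \<le> n + 1)" by (metis Un_iff atLeastAtMost_iff un)
  have unx1: "\<And>x. x \<in> L \<Longrightarrow> 1 \<le> x \<and> x \<le> n + 1" using unx by blast
  have unx2: "\<And>x. x \<in> R \<Longrightarrow> 1 \<le> x \<and> x \<le> n + 1" using unx by blast
  have unx3: "\<And>x. 1 \<le> x \<Longrightarrow> x \<le> n + 1 \<Longrightarrow> x \<notin> L \<Longrightarrow> x \<in> R" using unx by blast
  have dx: "\<And>x. x \<in> L \<Longrightarrow> x \<notin> R" using disj by blast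
  define sl where "sl = sorted_list_of_set L"
  define g where "g = (\<lambda>l. card {r \<in> R. l < r})"
  define K where "K = card R"
  define a where "a = card {l \<in> L. l \<le> k}"
  have slset: "set sl = L" using fL by (simp add: sl_def)
  have dist: "distinct sl" by (simp add: sl_def)
  have srt: "sorted_wrt (<) sl" by (simp add: sl_def strict_sorted_list_of_set)
  have len: "length sl = card L" by (simp add: sl_def)
  have rank: "card {x \<in> L. x < sl ! i} = i" if i: "i < length sl" for i
  proof -
    have "{x \<in> L. x < sl ! i} = set (take i sl)"
    proof (intro set_eqI iffI)
      fix x assume "x \<in> {x \<in> L. x < sl ! i}"
      then have x: "x \<in> set sl" "x < sl ! i" using slset by auto
      then obtain j where j: "j < length sl" "x = sl ! j" by (metis in_set_conv_nth)
      have "j < i"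
      proof (rule ccontr)
        assume "\<not> j < i"
        then have "i = j \<or> i < j" by auto
        then have "sl ! i \<le> sl ! j" using srt j(1) sorted_wrt_nth_less[OF srt, of i j] by auto
        then show False using x j by simp
      qed
      then show "x \<in> set (take i sl)" using j i by (auto simp: in_set_conv_nth)
    next
      fix x assume "x \<in> set (take i sl)"
      then obtain j where j: "j < i" "x = sl ! j" using i by (auto simp: in_set_conv_nth)
      then have "x < sl ! i" using sorted_wrt_nth_less[OF srt, of j i] i by auto
      moreover have "x \<in> L" using j i slset by auto
      ultimately show "x \<in> {x \<in> L. x < sl ! i}" by simp
    qed
    moreover have "card (set (take i sl)) = i"
      using dist i by (simp add: distinct_card)
    ultimately show ?thesis by simp
  qed
  have key: "g (sl ! i) + sl ! i = K + i + 1" if i: "i < length sl" for i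
  proof -
    define l where "l = sl ! i"
    have lL: "l \<in> L" using i slset l_def by auto
    then have lR: "l \<notin> R" and l1: "1 \<le> l" and ln: "l \<le> n + 1" using dx unx1 by auto
    have e1: "{1..<l} = {x \<in> L. x < l} \<union> {r \<in> R. r < l}"
    proof (intro set_eqI)
      fix x show "x \<in> {1..<l} \<longleftrightarrow> x \<in> {x \<in> L. x < l} \<union> {r \<in> R. r < l}"
        using unx1[of x] unx2[of x] unx3[of x] ln by (cases "x \<in> L") auto
    qed
    have "card {1..<l} = card {x \<in> L. x < l} + card {r \<in> R. r < l}"
      unfolding e1 by (rule card_Un_disjoint) (use fL fR dx in auto)
    then have c1: "l - 1 = i + card {r \<in> R. r < l}"
      using rank[OF i] l_def by simp
    have e2: "R = {r \<in> R. r < l} \<union> {r \<in> R. l < r}"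
    proof (intro set_eqI)
      fix x show "x \<in> R \<longleftrightarrow> x \<in> {r \<in> R. r < l} \<union> {r \<in> R. l < r}"
        using lR by (cases "x = l") auto
    qed
    have c2: "K = card {r \<in> R. r < l} + g l"
      unfolding K_def g_def
      by (subst e2) (rule card_Un_disjoint, use fR in auto)
    show ?thesis using c1 c2 l1 l_def by simp
  qed
  have le_iff: "sl ! i \<le> k \<longleftrightarrow> i < a" if i: "i < length sl" for i
  proof
    assume h: "sl ! i \<le> k"
    have "insert (sl ! i) {x \<in> L. x < sl ! i} \<subseteq> {l \<in> L. l \<le> k}"
      using h i slset by auto
    then have "card (insert (sl ! i) {x \<in> L. x < sl ! i}) \<le> a"
      unfolding a_def by (rule card_mono[rotated]) (use fL in auto)
    then show "i < a" using rank[OF i] fL by simp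
  next
    assume h: "i < a"
    show "sl ! i \<le> k"
    proof (rule ccontr)
      assume "\<not> sl ! i \<le> k"
      then have "{l \<in> L. l \<le> k} \<subseteq> {x \<in> L. x < sl ! i}" by auto
      then have "a \<le> card {x \<in> L. x < sl ! i}" unfolding a_def
        by (rule card_mono[rotated]) (use fL in auto)
      then have "a \<le> i" using rank[OF i] by simp
      then show False using h by simp
    qed
  qed
  have aL: "a \<le> length sl" unfolding a_def len by (rule card_mono[OF fL]) auto
  have sl0: "sl ! 0 = 1"
  proof -
    obtain j where j: "j < length sl" "sl ! j = 1" using L1 slset by (metis in_set_conv_nth)
    have "{x \<in> L. x < sl ! j} = {}" using unx1 j(2) by fastforce
    moreover have "card {x \<in> L. x < sl ! j} = j" by (rule rank[OF j(1)])
    ultimately have "j = 0" by (metis card.empty)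
    then show ?thesis using j by simp
  qed
  have ne: "0 < length sl" using L1 slset by (cases sl) auto
  have lam0: "map g sl ! 0 = K" using key[OF ne] sl0 ne by simp
  define I where "I = {i. i < a \<and> k \<le> K + i}"
  have Dk_eq: "Dk (map g sl) k = (\<lambda>i. (Suc i, K + Suc i - k)) ` I"
  proof (intro set_eqI iffI)
    fix p assume "p \<in> Dk (map g sl) k"
    then obtain i j where p: "p = (i, j)" and h1: "1 \<le> i" "i \<le> length sl" "1 \<le> j"
      "j \<le> g (sl ! (i - 1))" "int K + int i - int j = int k"
      unfolding Dk_def Fer_def using lam0 by auto
    obtain i0 where i0: "i = Suc i0" using h1 by (cases i) auto
    have i0l: "i0 < length sl" using h1 i0 by simp
    have kk: "g (sl ! i0) + sl ! i0 = K + i0 + 1" by (rule key[OF i0l])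
    have "sl ! i0 \<le> k" using h1 i0 kk by simp
    then have "i0 < a" using le_iff[OF i0l] by simp
    moreover have "k \<le> K + i0" "j = K + Suc i0 - k" using h1 i0 by auto
    ultimately show "p \<in> (\<lambda>i. (Suc i, K + Suc i - k)) ` I" using p i0 unfolding I_def by auto
  next
    fix p assume "p \<in> (\<lambda>i. (Suc i, K + Suc i - k)) ` I"
    then obtain i0 where p: "p = (Suc i0, K + Suc i0 - k)" and h: "i0 < a" "k \<le> K + i0"
      unfolding I_def by auto
    have i0l: "i0 < length sl" using h aL by simp
    have kk: "g (sl ! i0) + sl ! i0 = K + i0 + 1" by (rule key[OF i0l])
    have "sl ! i0 \<le> k" using le_iff[OF i0l] h by simp
    then have "K + Suc i0 - k \<le> g (sl ! i0)" using kk h by simp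
    then show "p \<in> Dk (map g sl) k" unfolding Dk_def Fer_def using p i0l lam0 h by auto
  qed
  have cD: "card (Dk (map g sl) k) = card I"
    unfolding Dk_eq by (rule card_image) (auto simp: inj_on_def)
  have "I = {k - K..<a}" unfolding I_def by auto
  then have cI: "card I = a - (k - K)" by simp
  define c where "c = card {r \<in> R. r \<le> k}"
  define b where "b = card {r \<in> R. k < r}"
  have e3: "{1..k} = {l \<in> L. l \<le> k} \<union> {r \<in> R. r \<le> k}" proof (intro set_eqI)
    fix x show "x \<in> {1..k} \<longleftrightarrow> x \<in> {l \<in> L. l \<le> k} \<union> {r \<in> R. r \<le> k}"
      using unx1[of x] unx2[of x] unx3[of x] kn by (cases "x \<in> L") auto
  qed
  have "card {1..k} = card {l \<in> L. l \<le> k} + card {r \<in> R. r \<le> k}"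
    unfolding e3 by (rule card_Un_disjoint) (use fL fR dx in auto)
  then have "k = a + c" unfolding a_def c_def by simp
  moreover have "K = c + b"
  proof -
    have e4: "R = {r \<in> R. r \<le> k} \<union> {r \<in> R. k < r}" by auto
    have "card R = card {r \<in> R. r \<le> k} + card {r \<in> R. k < r}"
      by (subst e4) (rule card_Un_disjoint, use fR in auto)
    then show ?thesis unfolding K_def c_def b_def .
  qed
  ultimately have "a - (k - K) = min a b" by linarith
  then show ?thesis using cD cI unfolding g_def sl_def a_def b_def by simp
qed


theorem lemma3p13:
  fixes n k :: nat and c :: "nat \<Rightarrow> nat"
  assumes "n \<ge> 1" and "coxeter_elem n c" and "1 \<le> k" and "k \<le> n"
  shows "card (Dk (lambda_c n c) k) =
           min (card {l \<in> Lc n c \<union> {1}. l \<le> k}) (card {r \<in> Rc n c \<union> {n + 1}. k < r})"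
proof -
  from assms(2) obtain ws where ws: "distinct ws" "set ws = {1..n}" "c = PP ws"
    unfolding coxeter_elem_def by blast
  from PP_cyc[OF ws(1,2)] obtain xs where cy0: "cyc (n+1) (PP ws) xs" ..
  then have cy: "cyc (n+1) c xs" using ws(3) by simp
  have len: "length xs = n + 1" and dis: "distinct xs" and st: "set xs = {1..n+1}"
    and h0: "xs ! 0 = 1" using cy by (auto simp: cyc_def)
  have orb: "\<And>j. j < n + 1 \<Longrightarrow> (c ^^ j) 1 = xs ! j" using cyc_orbit[OF cy] by blast
  have "n + 1 \<in> set xs" using st by simp
  then obtain t where t: "t < n + 1" "xs ! t = n + 1" using len by (metis in_set_conv_nth)
  define m where "m = pos_top n c"
  have ct: "(c ^^ t) 1 = n + 1" using orb t by simp
  have mt: "m \<le> t" unfolding m_def pos_top_def by (rule Least_le) (rule ct)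
  have cm: "(c ^^ m) 1 = n + 1" unfolding m_def pos_top_def by (rule LeastI) (rule ct)
  have "xs ! m = xs ! t" using orb[of m] mt t cm by simp
  then have mt': "m = t" using dis len mt t nth_eq_iff_index_eq[of xs m t] by simp
  define L where "L = Lc n c \<union> {1}"
  define R where "R = Rc n c \<union> {n + 1}"
  have Leq: "L = (\<lambda>j. xs ! j) ` {..<t}"
  proof (intro set_eqI iffI)
    fix x assume "x \<in> L"
    then consider "x = 1" | j where "0 < j" "j < m" "x = (c ^^ j) 1"
      unfolding L_def Lc_def m_def by blast
    then show "x \<in> (\<lambda>j. xs ! j) ` {..<t}"
    proof cases
      case 1
      have "t \<noteq> 0" using h0 t(2) assms(1) by (cases t) auto
      then show ?thesis using 1 h0 by (intro image_eqI[of _ _ 0]) auto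
    next
      case 2 then show ?thesis using orb mt' t by auto
    qed
  next
    fix x assume "x \<in> (\<lambda>j. xs ! j) ` {..<t}"
    then obtain j where j: "j < t" "x = xs ! j" by auto
    show "x \<in> L"
    proof (cases "j = 0")
      case True then show ?thesis using j h0 unfolding L_def by simp
    next
      case False
      then have "x = (c ^^ j) 1" using orb j t by simp
      then show ?thesis using False j mt' unfolding L_def Lc_def m_def by auto
    qed
  qed
  have Req: "R = (\<lambda>j. xs ! j) ` {t..n}"
  proof (intro set_eqI iffI)
    fix x assume "x \<in> R"
    then consider "x = n + 1" | j where "m < j" "j \<le> n" "x = (c ^^ j) 1"
      unfolding R_def Rc_def m_def by blast
    then show "x \<in> (\<lambda>j. xs ! j) ` {t..n}"
    proof cases
      case 1 then show ?thesis using t by force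
    next
      case 2 then show ?thesis using orb mt' t by auto
    qed
  next
    fix x assume "x \<in> (\<lambda>j. xs ! j) ` {t..n}"
    then obtain j where j: "t \<le> j" "j \<le> n" "x = xs ! j" by auto
    show "x \<in> R"
    proof (cases "j = t")
      case True then show ?thesis using j t unfolding R_def by simp
    next
      case False
      then have "x = (c ^^ j) 1" using orb j by simp
      then show ?thesis using False j mt' unfolding R_def Rc_def m_def by auto
    qed
  qed
  have disj: "L \<inter> R = {}"
  proof (rule ccontr)
    assume "L \<inter> R \<noteq> {}"
    then obtain i j where "i < t" "t \<le> j" "j \<le> n" "xs ! i = xs ! j" unfolding Leq Req by auto
    then show False using dis len nth_eq_iff_index_eq[of xs i j] by simp
  qed
  have "L \<union> R = (\<lambda>j. xs ! j) ` ({..<t} \<union> {t..n})" unfolding Leq Req by auto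
  also have "{..<t} \<union> {t..n} = {..<length xs}" using t len by auto
  also have "(\<lambda>j. xs ! j) ` {..<length xs} = set xs" by (auto simp: set_conv_nth)
  finally have un: "L \<union> R = {1..n+1}" using st by simp
  have L1: "1 \<in> L" unfolding L_def by simp
  have "card (Dk (map (\<lambda>l. card {r \<in> R. l < r}) (sorted_list_of_set L)) k) =
     min (card {l \<in> L. l \<le> k}) (card {r \<in> R. k < r})"
    by (rule partB[OF disj un L1 assms(3,4)])
  then show ?thesis unfolding lambda_c_def L_def R_def .
qed

end
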